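(* For integers $d\ge 0$ and $n\ge 0$, let $F_{d,n}=E_\infty(\mu_{d,n})$, where $\mu_{d,n}=\sum_{i=1}^n\delta_{v_{j(i)}}$ for an orthonormal basis $v_1,\dots,v_{d+1}$ of $\mathbf{R}^{d+1}$ and $j(i)\in\{1,\dots,d+1\}$ with $j(i)\equiv i\pmod{d+1}$ (so $F_{d,n}$ equals the number of pairs $1\le i<i'\le n$ with $i\not\equiv i'\pmod{d+1}$). For integers $d\ge1$ and $0\le k\le n$, let $F_{d,n,k}=E_\infty(\nu_{d,n,k})$, where, for a unit vector $p\in\mathbf{R}^{d+1}$ and an orthonormal basis $w_1,\dots,w_d$ of $V=p^\perp$, $\nu_{d,n,k}=(n-k)\delta_p+\sum_{i=1}^k\delta_{w_{j(i)}}$ with $j(i)\in\{1,\dots,d\}$ and $j(i)\equiv i\pmod d$. If $n-1\ge d\ge1$ and $\frac{dn}{d+1}\le k\le n-1$, then $$F_{d,n-k}+F_{d-1,n}<F_{d,n,k},\qquad F_{d,n,k}>F_{d,n,k+1},$$ and moreover $F_{d,n,\lfloor dn/(d+1)\rfloor}=F_{d,n,\lceil dn/(d+1)\rceil}$.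
   Context: Define $\Lambda^\infty(x,y)=1$ if $x\cdot y=0$ and $0$ otherwise, for unit vectors $x,y$, and for a finite nonnegative measure $\mu$ on the unit sphere, $E_\infty(\mu)=\frac12\iint\Lambda^\infty(x,y)\,d\mu(x)\,d\mu(y)$; for $\mu=\sum_i\delta_{x_i}$ this is the number of unordered pairs of indices $\{i,i'\}$ with $x_i\cdot x_{i'}=0$. The quantities $F_{d,n}$ and $F_{d,n,k}$ do not depend on the choice of bases, $p$, by rotation invariance. *)

theory Defs
  imports Complex_Main
begin

text \<open>Vectors of R^m are represented as functions nat => real; only coordinates 0..m-1 matter.\<close>

definition dotp :: "nat \<Rightarrow> (nat \<Rightarrow> real) \<Rightarrow> (nat \<Rightarrow> real) \<Rightarrow> real" where
  "dotp m x y = (\<Sum>i<m. x i * y i)"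

definition ebas :: "nat \<Rightarrow> nat \<Rightarrow> real" where
  "ebas j = (\<lambda>i. if i = j then 1 else 0)"

text \<open>E_infinity of the atomic measure sum_i delta_{x_i}, for the point list xs in R^m:
  the number of unordered index pairs {i,i'} with x_i . x_i' = 0.\<close>
definition Einf :: "nat \<Rightarrow> (nat \<Rightarrow> real) list \<Rightarrow> nat" where
  "Einf m xs = card {(i, i'). i < i' \<and> i' < length xs \<and> dotp m (xs ! i) (xs ! i') = 0}"

text \<open>F_{d,n}: orthonormal basis e_0..e_d of R^{d+1}; point i (1<=i<=n) is e_{i mod (d+1)}
  (a relabelling of the basis, j(i) = i mod (d+1)).\<close>
definition F :: "nat \<Rightarrow> nat \<Rightarrow> nat" where
  "F d n = Einf (d + 1) (map (\<lambda>i. ebas (i mod (d + 1))) [1..<n + 1])"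

text \<open>F_{d,n,k}: p = e_d in R^{d+1}, orthonormal basis e_0..e_{d-1} of p^perp;
  measure (n-k) delta_p + sum_{i=1}^k delta_{e_{i mod d}}.\<close>
definition Fk :: "nat \<Rightarrow> nat \<Rightarrow> nat \<Rightarrow> nat" where
  "Fk d n k = Einf (d + 1) (replicate (n - k) (ebas d) @ map (\<lambda>i. ebas (i mod d)) [1..<k + 1])"

end

theory Submission imports Defs begin

lemma card_pairs:
  fixes N :: nat
  shows "card {(i,i'). i<i' \<and> i'<N \<and> R i i'} = (\<Sum>j<N. card {i. i<j \<and> R i j})"
proof (induction N)
  case 0 then show ?case by simp
next
  case (Suc N)
  have eq: "{(i,i'). i<i' \<and> i'<Suc N \<and> R i i'} = {(i,i'). i<i' \<and> i'<N \<and> R i i'} \<union> (\<lambda>i. (i,N)) ` {i. i<N \<and> R i N}"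
    by (auto simp: less_Suc_eq image_iff)
  have f1: "finite {(i,i'). i<i' \<and> i'<N \<and> R i i'}"
    by (rule finite_subset[of _ "{..<N} \<times> {..<N}"]) auto
  have "card ({(i,i'). i<i' \<and> i'<N \<and> R i i'} \<union> (\<lambda>i. (i,N)) ` {i. i<N \<and> R i N})
     = card {(i,i'). i<i' \<and> i'<N \<and> R i i'} + card ((\<lambda>i. (i,N)) ` {i. i<N \<and> R i N})"
    by (rule card_Un_disjoint) (use f1 in auto)
  moreover have "card ((\<lambda>i. (i,N)) ` {i. i<N \<and> R i N}) = card {i. i<N \<and> R i N}"
    by (rule card_image) (auto simp: inj_on_def)
  ultimately show ?case using Suc eq by simp
qed

lemma dot_ebas: "a < m \<Longrightarrow> b < m \<Longrightarrow> dotp m (ebas a) (ebas b) = (if a = b then 1 else 0)"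
proof -
  assume "a < m" "b < m"
  have "(\<lambda>i. ebas a i * ebas b i) = (\<lambda>i. if i = a then (if a = b then 1 else 0) else 0)"
    by (auto simp: ebas_def fun_eq_iff)
  then have "dotp m (ebas a) (ebas b) = (\<Sum>i<m. if i = a then (if a = b then 1 else 0) else 0)"
    unfolding dotp_def by (simp only:)
  also have "\<dots> = (if a = b then 1 else 0)" using \<open>a < m\<close> by simp
  finally show ?thesis .
qed

lemma same_card: "0 < m \<Longrightarrow> card {i. i<j \<and> i mod m = j mod m} = j div m"
proof (induction j rule: less_induct)
  case (less j)
  show ?case
  proof (cases "j < m")
    case True
    then have "{i. i<j \<and> i mod m = j mod m} = {}" by auto
    then show ?thesis using True by simp
  next
    case False
    have jm: "(j - m) mod m = j mod m" using False by (simp add: le_mod_geq)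
    have "{i. i<j \<and> i mod m = j mod m} = insert (j-m) {i. i<j-m \<and> i mod m = (j-m) mod m}"
    proof (rule set_eqI, rule iffI)
      fix i assume "i \<in> {i. i<j \<and> i mod m = j mod m}"
      then have a: "i < j" "i mod m = j mod m" by auto
      show "i \<in> insert (j-m) {i. i<j-m \<and> i mod m = (j-m) mod m}"
      proof (cases "i < j - m")
        case True then show ?thesis using a jm by simp
      next
        case c: False
        show ?thesis
        proof (rule ccontr)
          assume "i \<notin> insert (j-m) {i. i<j-m \<and> i mod m = (j-m) mod m}"
          then have "j - m < i" using c by auto
          define s where "s = i - (j - m)"
          have s: "i = j - m + s" "0 < s" "s < m" using a(1) False \<open>j - m < i\<close> unfolding s_def by auto
          have "(j - m + s) mod m = ((j-m) mod m + s) mod m" by (simp add: mod_add_left_eq)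
          then have "i mod m = (j mod m + s) mod m" using s jm by simp
          moreover have "j mod m < m" using less.prems by simp
          ultimately show False using a(2) s
            by (cases "j mod m + s < m") (auto simp: le_mod_geq)
        qed
      qed
    next
      fix i assume "i \<in> insert (j-m) {i. i<j-m \<and> i mod m = (j-m) mod m}"
      then show "i \<in> {i. i<j \<and> i mod m = j mod m}" using jm False less.prems by auto
    qed
    moreover have "j - m \<notin> {i. i<j-m \<and> i mod m = (j-m) mod m}" by simp
    moreover have "finite {i. i<j-m \<and> i mod m = (j-m) mod m}" by simp
    ultimately have "card {i. i<j \<and> i mod m = j mod m} = Suc ((j-m) div m)"
      using less.IH[of "j-m"] less.prems False by simp
    then show ?thesis using False less.prems by (simp add: le_div_geq)
  qed
qed

lemma diff_card: "0 < m \<Longrightarrow> card {i. i<j \<and> i mod m \<noteq> j mod m} = j - j div m"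
proof -
  assume m: "0 < m"
  have "{i. i<j \<and> i mod m \<noteq> j mod m} = {..<j} - {i. i<j \<and> i mod m = j mod m}" by auto
  moreover have "card ({..<j} - {i. i<j \<and> i mod m = j mod m}) = j - card {i. i<j \<and> i mod m = j mod m}"
    by (subst card_Diff_subset) auto
  ultimately show ?thesis using same_card[OF m] by simp
qed

lemma mod_suc_eq: "0 < (m::nat) \<Longrightarrow> ((i+1) mod m = (j+1) mod m) = (i mod m = j mod m)"
proof -
  assume m: "0 < m"
  have k: "x mod m = ((x+1) mod m + (m-1)) mod m" for x
  proof -
    have "((x+1) mod m + (m-1)) mod m = ((x+1) + (m-1)) mod m" by (simp add: mod_add_left_eq)
    also have "(x+1) + (m-1) = x + m" using m by simp
    finally show ?thesis by simp
  qed
  show ?thesis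
  proof
    assume "(i+1) mod m = (j+1) mod m" then show "i mod m = j mod m" using k[of i] k[of j] by simp
  next
    assume "i mod m = j mod m" then show "(i+1) mod m = (j+1) mod m" by (metis mod_add_left_eq)
  qed
qed

definition G :: "nat \<Rightarrow> nat \<Rightarrow> nat" where "G m N = (\<Sum>t<N. t - t div m)"

lemma F_sum: "F d n = G (d+1) n"
proof -
  let ?xs = "map (\<lambda>i. ebas (i mod (d + 1))) [1..<n + 1]"
  have nth: "i < n \<Longrightarrow> ?xs ! i = ebas ((i+1) mod (d+1))" for i by (simp add: nth_upt del: upt_Suc)
  have "{(i, i'). i < i' \<and> i' < length ?xs \<and> dotp (d + 1) (?xs ! i) (?xs ! i') = 0}
      = {(i, i'). i < i' \<and> i' < n \<and> i mod (d+1) \<noteq> i' mod (d+1)}"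
  proof (rule set_eqI, clarify)
    fix i i'
    show "((i, i') \<in> {(i, i'). i < i' \<and> i' < length ?xs \<and> dotp (d + 1) (?xs ! i) (?xs ! i') = 0})
      = ((i, i') \<in> {(i, i'). i < i' \<and> i' < n \<and> i mod (d+1) \<noteq> i' mod (d+1)})"
      using nth[of i] nth[of i'] dot_ebas[of "(i+1) mod (d+1)" "d+1" "(i'+1) mod (d+1)"]
        mod_suc_eq[of "d+1" i i'] by auto
  qed
  then show ?thesis unfolding F_def Einf_def G_def
    by (simp add: card_pairs diff_card)
qed

lemma mod_lt1: "1 \<le> (d::nat) \<Longrightarrow> x mod d < d + 1"
proof -
  assume "1 \<le> d" then have "x mod d < d" by simp
  then show ?thesis by simp
qed

lemma sum_split: "(\<Sum>j<a+b. f j) = (\<Sum>j<a. f j) + (\<Sum>t<b. f (a+t::nat))"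
  by (induction b) (auto simp: add.assoc)

lemma Fk_sum:
  assumes "1 \<le> d" "k \<le> n"
  shows "Fk d n k = (n-k)*k + G d k"
proof -
  define a where "a = n - k"
  have n: "n = a + k" using assms a_def by simp
  let ?xs = "replicate a (ebas d) @ map (\<lambda>i. ebas (i mod d)) [1..<k + 1]"
  have len: "length ?xs = a + k" by simp
  have nth1: "j < a \<Longrightarrow> ?xs ! j = ebas d" for j by (simp add: nth_append)
  have nth2: "t < k \<Longrightarrow> ?xs ! (a+t) = ebas ((t+1) mod d)" for t by (simp add: nth_append nth_upt del: upt_Suc)
  define R where "R i j = (dotp (d + 1) (?xs ! i) (?xs ! j) = 0)" for i j
  have "Fk d n k = card {(i, i'). i < i' \<and> i' < a + k \<and> R i i'}"
    unfolding Fk_def Einf_def R_def a_def[symmetric] len ..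
  also have "\<dots> = (\<Sum>j<a. card {i. i<j \<and> R i j}) + (\<Sum>t<k. card {i. i<a+t \<and> R i (a+t)})"
    by (simp add: card_pairs sum_split)
  also have "(\<Sum>j<a. card {i. i<j \<and> R i j}) = 0"
  proof -
    have "j < a \<Longrightarrow> {i. i<j \<and> R i j} = {}" for j
      using nth1 dot_ebas[of d "d+1" d] unfolding R_def by auto
    then show ?thesis by simp
  qed
  also have "(\<Sum>t<k. card {i. i<a+t \<and> R i (a+t)}) = (\<Sum>t<k. a + (t - t div d))"
  proof (rule sum.cong[OF refl])
    fix t assume "t \<in> {..<k}"
    then have t: "t < k" by simp
    have eq: "{i. i<a+t \<and> R i (a+t)} = {..<a} \<union> (\<lambda>s. a + s) ` {s. s<t \<and> s mod d \<noteq> t mod d}"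
    proof (rule set_eqI, rule iffI)
      fix i assume "i \<in> {i. i<a+t \<and> R i (a+t)}"
      then have i: "i < a + t" "R i (a+t)" by auto
      show "i \<in> {..<a} \<union> (\<lambda>s. a + s) ` {s. s<t \<and> s mod d \<noteq> t mod d}"
      proof (cases "i < a")
        case True then show ?thesis by simp
      next
        case False
        define s where "s = i - a"
        have iss: "i = a + s" "s < t" using False i(1) s_def by auto
        have "R (a+s) (a+t)" using i iss by simp
        moreover have "dotp (d+1) (ebas ((s+1) mod d)) (ebas ((t+1) mod d)) = (if (s+1) mod d = (t+1) mod d then 1 else 0)"
          by (rule dot_ebas) (use assms(1) mod_lt1 in auto)
        ultimately have "(s+1) mod d \<noteq> (t+1) mod d"
          using nth2[of s] nth2[of t] t iss unfolding R_def by (auto split: if_splits)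
        then have "s mod d \<noteq> t mod d" using mod_suc_eq[of d s t] assms(1) by simp
        then show ?thesis using iss by auto
      qed
    next
      fix i assume i: "i \<in> {..<a} \<union> (\<lambda>s. a + s) ` {s. s<t \<and> s mod d \<noteq> t mod d}"
      show "i \<in> {i. i<a+t \<and> R i (a+t)}"
      proof (cases "i < a")
        case True
        have "(t+1) mod d < d" using assms(1) by simp
        then show ?thesis using True nth1[of i] nth2[of t] t dot_ebas[of d "d+1" "(t+1) mod d"]
          unfolding R_def by auto
      next
        case False
        then obtain s where s: "i = a + s" "s < t" "s mod d \<noteq> t mod d" using i by auto
        have "(s+1) mod d \<noteq> (t+1) mod d" using mod_suc_eq[of d s t] assms(1) s by simp
        moreover have "(s+1) mod d < d + 1" "(t+1) mod d < d + 1" using assms(1) mod_lt1 by auto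
        ultimately show ?thesis
          using nth2[of s] nth2[of t] t s dot_ebas[of "(s+1) mod d" "d+1" "(t+1) mod d"]
          unfolding R_def by auto
      qed
    qed
    have "card ({..<a} \<union> (\<lambda>s. a + s) ` {s. s<t \<and> s mod d \<noteq> t mod d})
        = card {..<a} + card ((\<lambda>s. a + s) ` {s. s<t \<and> s mod d \<noteq> t mod d})"
      by (rule card_Un_disjoint) auto
    also have "card ((\<lambda>s. a + s) ` {s. s<t \<and> s mod d \<noteq> t mod d}) = card {s. s<t \<and> s mod d \<noteq> t mod d}"
      by (rule card_image) auto
    finally show "card {i. i<a+t \<and> R i (a+t)} = a + (t - t div d)"
      using eq diff_card[of d t] assms(1) by simp
  qed
  finally have e: "Fk d n k = 0 + (\<Sum>t<k. a + (t - t div d))" .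
  have "(\<Sum>t<k. a + (t - t div d)) = (\<Sum>t<k. a) + (\<Sum>t<k. t - t div d)"
    by (rule sum.distrib)
  then show ?thesis using e unfolding G_def a_def by (simp add: mult.commute)
qed


lemma G_Suc: "G m (Suc k) = G m k + (k - k div m)"
  unfolding G_def by simp

lemma gauss2: "2 * (\<Sum>t<a. t) + a = (a::nat) * a"
  by (induction a) (auto simp: algebra_simps)

theorem lemma2p3:
  fixes d n k :: nat
  assumes "1 \<le> d" and "d \<le> n - 1"
    and "real d * real n / real (d + 1) \<le> real k" and "k \<le> n - 1"
  shows "F d (n - k) + F (d - 1) n < Fk d n k
    \<and> Fk d n k > Fk d n (k + 1)
    \<and> Fk d n (nat \<lfloor>real d * real n / real (d + 1)\<rfloor>)
        = Fk d n (nat \<lceil>real d * real n / real (d + 1)\<rceil>)"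
proof -
  have d: "1 \<le> d" using assms(1) .
  have n1: "d + 1 \<le> n" using assms(1,2) by arith
  have kn: "k < n" using assms(4) n1 by arith
  have "real d * real n \<le> real k * real (d + 1)"
    using assms(3) by (simp add: divide_le_eq)
  then have "real (d * n) \<le> real (k * (d + 1))" by (simp only: of_nat_mult)
  then have main: "d * n \<le> k * (d + 1)" by (simp only: of_nat_le_iff)
  define a where "a = n - k"
  have a1: "1 \<le> a" using kn a_def by simp
  have nka: "n = k + a" using kn a_def by simp
  have dak: "d * a \<le> k" using main unfolding nka by (simp add: algebra_simps)
  have qa: "a \<le> k div d"
  proof -
    have "(a * d) div d \<le> k div d" by (rule div_le_mono) (use dak in \<open>simp add: mult.commute\<close>)
    then show ?thesis using d by simp
  qed
  have ak: "a \<le> k" using qa div_le_dividend[of k d] by linarith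
  have Fkk: "Fk d n k = a * k + G d k" using Fk_sum[OF d] kn a_def by simp
  have c1: "F d (n - k) + F (d - 1) n < Fk d n k"
  proof -
    have F1: "F d (n - k) = G (d+1) a" using F_sum a_def by simp
    have F2: "F (d - 1) n = G d n" using F_sum[of "d-1" n] d by simp
    have Gn: "G d n = G d k + (\<Sum>t<a. (k+t) - (k+t) div d)"
      unfolding nka G_def by (rule sum_split)
    have b1: "G (d+1) a \<le> (\<Sum>t<a. t)" unfolding G_def by (rule sum_mono) simp
    have b2: "(\<Sum>t<a. (k+t) - (k+t) div d) \<le> (\<Sum>t<a. (k - a) + t)"
    proof (rule sum_mono)
      fix t assume "t \<in> {..<a}"
      have "k div d \<le> (k+t) div d" by (rule div_le_mono) simp
      then show "(k+t) - (k+t) div d \<le> (k - a) + t" using qa ak by linarith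
    qed
    have b3: "(\<Sum>t<a. (k - a) + t) = a * (k - a) + (\<Sum>t<a. t)"
      by (simp add: sum.distrib)
    have "a * k = a * a + a * (k - a)"
      using ak by (metis add_mult_distrib2 le_add_diff_inverse)
    then have "a * k = 2 * (\<Sum>t<a. t) + a + a * (k - a)" using gauss2[of a] by simp
    then show ?thesis using F1 F2 Gn b1 b2 b3 Fkk a1 by linarith
  qed
  have step: "Fk d n (Suc j) = (n - Suc j) * Suc j + G d j + (j - j div d)" if "j < n" for j
  proof -
    have "Fk d n (Suc j) = (n - Suc j) * Suc j + G d (Suc j)" by (rule Fk_sum[OF d]) (use that in simp)
    also have "G d (Suc j) = G d j + (j - j div d)" by (rule G_Suc)
    finally show ?thesis by (simp only: add.assoc)
  qed
  have c2: "Fk d n (k + 1) < Fk d n k"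
  proof -
    obtain b where b: "a = Suc b" using a1 by (cases a) auto
    have "n - Suc k = b" using b a_def by simp
    then have e: "Fk d n (k+1) = b * Suc k + G d k + (k - k div d)" using step[OF kn] by simp
    have "k div d \<le> k" by simp
    moreover have "b * Suc k = b * k + b" "a * k = b * k + k" using b by simp_all
    ultimately show ?thesis using e Fkk b qa by linarith
  qed
  define k0 where "k0 = d * n div (d + 1)"
  define x where "x = real d * real n / real (d + 1)"
  have xe: "x = real (d * n) / real (d + 1)" unfolding x_def by simp
  have fl: "nat \<lfloor>x\<rfloor> = k0" unfolding xe k0_def floor_divide_of_nat_eq by simp
  have c3: "Fk d n (nat \<lfloor>x\<rfloor>) = Fk d n (nat \<lceil>x\<rceil>)"
  proof (cases "d * n mod (d + 1) = 0")
    case True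
    then have "d * n = k0 * (d + 1)" unfolding k0_def by (metis mult.commute div_mult_mod_eq add_0_right)
    then have "x = real k0 * real (d + 1) / real (d + 1)" unfolding xe by (simp only: of_nat_mult)
    then have "x = real k0" by simp
    then show ?thesis by simp
  next
    case False
    define r where "r = d * n mod (d + 1)"
    have r: "0 < r" "r < d + 1" using False r_def by auto
    have dm: "k0 * (d + 1) + r = d * n" unfolding k0_def r_def by (metis mult.commute div_mult_mod_eq)
    have "real k0 * real (d+1) < real (d * n)" using dm r by (metis of_nat_less_iff of_nat_mult less_add_same_cancel1)
    then have lo: "real k0 < x" unfolding xe by (simp add: less_divide_eq)
    have "real (d * n) \<le> (real k0 + 1) * real (d+1)"
    proof -
      have "d * n \<le> (k0 + 1) * (d + 1)" using dm r by (simp add: algebra_simps)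
      then have "real (d * n) \<le> real ((k0 + 1) * (d + 1))" by (simp only: of_nat_le_iff)
      then show ?thesis by (simp add: algebra_simps)
    qed
    then have hi: "x \<le> real k0 + 1" unfolding xe by (simp add: divide_le_eq)
    have ce: "\<lceil>x\<rceil> = int k0 + 1" by (rule ceiling_unique) (use lo hi in auto)
    have k0n: "k0 < n"
    proof -
      have "k0 * (d + 1) < n * (d + 1)" using dm r by (simp add: algebra_simps)
      then show ?thesis using mult_less_cancel2 by blast
    qed
    obtain b where b: "n - k0 = Suc b" using k0n by (cases "n - k0") auto
    have nb: "n = k0 + b + 1" using b k0n by simp
    have "k0 + r = d * b + d" using dm unfolding nb by (simp add: algebra_simps)
    then have "k0 = b * d + (d - r)" using r by (simp add: algebra_simps)
    moreover have "d - r < d" using r by simp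
    ultimately have qb: "k0 div d = b" using d by simp
    have e1: "Fk d n k0 = Suc b * k0 + G d k0" using Fk_sum[OF d, of k0 n] k0n b by simp
    have e2: "Fk d n (Suc k0) = b * Suc k0 + G d k0 + (k0 - b)" proof -
      have "n - Suc k0 = b" using b by simp
      then show ?thesis using step[OF k0n] qb by (simp only:)
    qed
    have "b \<le> k0" using qb div_le_dividend[of k0 d] by linarith
    then have "Fk d n k0 = Fk d n (Suc k0)" using e1 e2 by (simp add: algebra_simps)
    then show ?thesis using fl ce by (simp add: nat_add_distrib)
  qed
  show ?thesis using c1 c2 c3 unfolding x_def by simp
qed

end
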